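(* Let $0<\delta<1$, $t>1$, $\lambda_c:=1/(t^{1-\delta}-1)$, $\lambda_c\le\lambda\le t^{1-\delta}-1$, let $0<k<t^{\delta-1}$, and let $\phi$ satisfy $0<\phi<\pi/2$ if $\ln\lambda\ge0$ and $0<\phi<\arctan(\pi/|\ln\lambda|)$ if $\ln\lambda<0$. For $z$ on the contour $\{z=1-k+R{\rm e}^{{\rm i}\phi}:0\le R<\infty\}$, $$\left|\frac{\partial F}{\partial z}(z;\lambda)\right|>\min\!\left(\frac{\pi}{2}-\phi,\ \ln\!\left(\frac{t^{\delta-1}}{k}\right)\right),$$ and for sufficiently large $R$, $\left|\frac{\partial F}{\partial z}\right|>\frac{\pi}{2}-\phi$.
   Context: $F(z;\lambda):=(1-z)\ln(1-z)+z\ln z+z\ln\lambda$, with branch cuts $(-\infty,0]$ and $[1,\infty)$. *)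

theory Defs
  imports "HOL-Analysis.Analysis"
begin

text \<open>F(z;lambda) = (1-z) Ln(1-z) + z Ln z + z ln lambda, using the principal
  complex logarithm Ln (branch cut (-infinity,0]); hence Ln(1-z) has cut [1,infinity).\<close>
definition Fpot :: "complex \<Rightarrow> real \<Rightarrow> complex" where
  "Fpot z lam = (1 - z) * Ln (1 - z) + z * Ln z + z * complex_of_real (ln lam)"

end

theory Submission
  imports Defs
begin

lemma derivF:
  assumes "z \<notin> \<real>\<^sub>\<le>\<^sub>0" "1 - z \<notin> \<real>\<^sub>\<le>\<^sub>0"
  shows "deriv (\<lambda>w. Fpot w lam) z = Ln z - Ln (1 - z) + of_real (ln lam)"
proof -
  have z0: "z \<noteq> 0" "1 - z \<noteq> 0" using assms by auto
  have dm: "((\<lambda>w. 1 - w) has_field_derivative -1) (at z)"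
    by (auto intro!: derivative_eq_intros)
  have d1: "((\<lambda>w. Ln (1 - w)) has_field_derivative inverse (1 - z) * (-1)) (at z)"
    by (rule DERIV_chain2[OF has_field_derivative_Ln[OF assms(2)] dm])
  have d2: "((\<lambda>w. (1 - w) * Ln (1 - w)) has_field_derivative (1 - z) * (inverse (1 - z) * (-1)) + (-1) * Ln (1 - z)) (at z)"
    by (rule DERIV_mult'[OF dm d1])
  have d3: "((\<lambda>w. w * Ln w) has_field_derivative z * inverse z + 1 * Ln z) (at z)"
    by (rule DERIV_mult'[OF DERIV_ident has_field_derivative_Ln[OF assms(1)]])
  have d4: "((\<lambda>w. w * complex_of_real (ln lam)) has_field_derivative 1 * complex_of_real (ln lam)) (at z)"
    using DERIV_cmult_right[OF DERIV_ident, of "complex_of_real (ln lam)" z] by simp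
  have "((\<lambda>w. Fpot w lam) has_field_derivative
      ((1 - z) * (inverse (1 - z) * (-1)) + (-1) * Ln (1 - z)) + (z * inverse z + 1 * Ln z) + 1 * complex_of_real (ln lam)) (at z)"
    unfolding Fpot_def by (intro DERIV_add d2 d3 d4)
  moreover have "((1 - z) * (inverse (1 - z) * (-1)) + (-1) * Ln (1 - z)) + (z * inverse z + 1 * Ln z) + 1 * complex_of_real (ln lam)
     = Ln z - Ln (1 - z) + of_real (ln lam)" using z0 by (simp add: field_simps)
  ultimately show ?thesis by (metis DERIV_imp_deriv)
qed


lemma ReIm_pt:
  shows "Re (complex_of_real a + complex_of_real R * exp (\<i> * complex_of_real \<phi>)) = a + R * cos \<phi>"
    and "Im (complex_of_real a + complex_of_real R * exp (\<i> * complex_of_real \<phi>)) = R * sin \<phi>"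
  by (simp_all add: Re_exp Im_exp)

lemma aux1: "(k - R * c) * c + (- (R * d)) * d = k * c - R * (c * c + d * d)" for k R c d :: real
  by (simp add: algebra_simps)

lemma aux2: "(k - R * c)^2 + (R * d)^2 = k*k - 2*k*R*c + R*R*(c*c+d*d)" for k R c d :: real
  by (simp add: algebra_simps power2_eq_square)

lemma aux3: "k*k - 2*k*R*c + R*R*1 = k^2 - R*(2*k*c - R)" for k R c :: real
  by (simp add: algebra_simps power2_eq_square)

lemma partB:
  fixes k \<phi> R L :: real
  assumes k: "0 < k" "k < 1" and ph: "0 < \<phi>" "\<phi> < pi/2" and R: "R > k * cos \<phi>"
    and zdef: "z = complex_of_real (1 - k) + complex_of_real R * exp (\<i> * complex_of_real \<phi>)"
  shows "Im (Ln z - Ln (1 - z) + complex_of_real L) > pi/2 - \<phi>"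
proof -
  have c: "cos \<phi> > 0" using ph by (intro cos_gt_zero_pi) auto
  have sn: "sin \<phi> > 0" using ph by (intro sin_gt_zero) auto
  have "k * cos \<phi> > 0" using k c by simp
  then have Rpos: "R > 0" using R by linarith
  have "Im z = R * sin \<phi>" unfolding zdef by (rule ReIm_pt(2))
  then have Imz: "Im z > 0" using Rpos sn by simp
  have lz: "Im (Ln z) > 0" using Im_Ln_pos_lt_imp[OF Imz] by simp
  define w where "w = 1 - z"
  have Rew: "Re w = k - R * cos \<phi>" and Imw: "Im w = - (R * sin \<phi>)"
    using ReIm_pt[of "1-k" R \<phi>] by (simp_all add: w_def zdef)
  have w0: "w \<noteq> 0" using Imw Rpos sn by auto
  define a where "a = Im (Ln w)"
  have am: "-pi < a" "a \<le> pi" unfolding a_def using mpi_less_Im_Ln Im_Ln_le_pi w0 by auto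
  have we: "exp (Ln w) = w" using w0 by simp
  have ee: "exp (Re (Ln w)) = cmod w" using w0 by simp
  have "Re w = exp (Re (Ln w)) * cos a" by (metis Re_exp we a_def)
  then have ReW: "Re w = cmod w * cos a" using ee by simp
  have "Im w = exp (Re (Ln w)) * sin a" by (metis Im_exp we a_def)
  then have ImW: "Im w = cmod w * sin a" using ee by simp
  have nw: "cmod w > 0" using w0 by simp
  have aneg: "a < 0"
  proof (rule ccontr)
    assume "\<not> a < 0"
    then have "sin a \<ge> 0" using am by (intro sin_ge_zero) auto
    then have "Im w \<ge> 0" using ImW nw by simp
    moreover have "R * sin \<phi> > 0" using Rpos sn by simp
    ultimately show False using Imw by linarith
  qed
  have "Re w * cos \<phi> + Im w * sin \<phi> = k * cos \<phi> - R * (cos \<phi> * cos \<phi> + sin \<phi> * sin \<phi>)"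
    unfolding Rew Imw by (rule aux1)
  also have "\<dots> = k * cos \<phi> - R" using sin_cos_squared_add[of \<phi>] by (simp add: power2_eq_square)
  finally have e1: "cmod w * cos (a - \<phi>) = k * cos \<phi> - R"
    unfolding cos_diff using ReW ImW by (simp add: algebra_simps)
  have "cos (a - \<phi>) < 0"
  proof (rule ccontr)
    assume "\<not> cos (a - \<phi>) < 0"
    then have "cmod w * cos (a - \<phi>) \<ge> 0" using nw by simp
    then show False using e1 R by simp
  qed
  then have "a - \<phi> \<le> - (pi/2)"
    using cos_gt_zero_pi[of "a - \<phi>"] aneg ph by (smt (verit))
  moreover have "Im (Ln z - Ln (1 - z) + complex_of_real L) = Im (Ln z) - a"
    unfolding a_def w_def by (simp only: minus_complex.sel plus_complex.sel Im_complex_of_real)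
  ultimately show ?thesis using lz by linarith
qed

lemma partA:
  fixes k \<phi> R s lam :: real
  assumes k: "0 < k" "k < s" "s < 1" and ph: "0 < \<phi>" "\<phi> < pi/2" and R: "0 \<le> R" "R \<le> k * cos \<phi>"
    and lam: "s / (1 - s) \<le> lam"
    and zdef: "z = complex_of_real (1 - k) + complex_of_real R * exp (\<i> * complex_of_real \<phi>)"
  shows "Re (Ln z - Ln (1 - z) + complex_of_real (ln lam)) > ln (s / k)"
proof -
  have c: "cos \<phi> > 0" using ph by (intro cos_gt_zero_pi) auto
  have sn: "sin \<phi> > 0" using ph by (intro sin_gt_zero) auto
  have "cos \<phi> \<noteq> 1"
  proof
    assume "cos \<phi> = 1"
    then have "(sin \<phi>)^2 = 0" using sin_cos_squared_add[of \<phi>] by simp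
    then show False using sn by simp
  qed
  then have c1: "cos \<phi> < 1" using cos_le_one[of \<phi>] by linarith
  have s0: "s > 0" using k by simp
  have "s / (1 - s) > 0" using s0 k by simp
  then have lam0: "lam > 0" using lam by linarith
  have Rez: "Re z = 1 - k + R * cos \<phi>" unfolding zdef by (rule ReIm_pt(1))
  define w where "w = 1 - z"
  have Rew: "Re w = k - R * cos \<phi>" and Imw: "Im w = - (R * sin \<phi>)"
    using ReIm_pt[of "1-k" R \<phi>] by (simp_all add: w_def zdef)
  have "R * cos \<phi> \<le> k * cos \<phi> * cos \<phi>" using R c by (simp add: mult_right_mono)
  also have "\<dots> < k"
  proof -
    have "cos \<phi> * cos \<phi> < 1 * 1" using c c1 by (intro mult_strict_mono) auto
    then have "k * (cos \<phi> * cos \<phi>) < k * 1" using k by (intro mult_strict_left_mono) auto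
    then show ?thesis by (simp add: mult.assoc)
  qed
  finally have Rewp: "Re w > 0" using Rew by simp
  have w0: "w \<noteq> 0" using Rewp by auto
  have zge: "cmod z \<ge> 1 - k"
  proof -
    have "R * cos \<phi> \<ge> 0" using R c by simp
    then show ?thesis using complex_Re_le_cmod[of z] Rez by linarith
  qed
  have z0: "z \<noteq> 0" using zge k by auto
  have "(cmod w)^2 = (k - R * cos \<phi>)^2 + (R * sin \<phi>)^2"
    unfolding cmod_power2 Rew Imw by simp
  also have "\<dots> = k*k - 2*k*R*cos \<phi> + R*R * (cos \<phi> * cos \<phi> + sin \<phi> * sin \<phi>)"
    by (rule aux2)
  also have "\<dots> = k^2 - R * (2*k*cos \<phi> - R)"
    using sin_cos_squared_add[of \<phi>] aux3[of k R "cos \<phi>"] by (simp add: power2_eq_square add.commute)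
  also have "\<dots> \<le> k^2"
  proof -
    have "k * cos \<phi> \<ge> 0" using k c by simp
    then have "R * (2*k*cos \<phi> - R) \<ge> 0" using R by (intro mult_nonneg_nonneg) auto
    then show ?thesis by linarith
  qed
  finally have sq: "(cmod w)^2 \<le> k^2" .
  have "cmod w \<le> k" by (rule power2_le_imp_le[OF sq]) (use k in simp)
  have nw: "cmod w > 0" using w0 by simp
  have "lam * (1 - k) > s"
  proof -
    have "lam * (1 - k) \<ge> s / (1 - s) * (1 - k)" using lam k by (intro mult_right_mono) auto
    moreover have "s / (1 - s) * (1 - k) > s" using k s0 by (simp add: field_simps)
    ultimately show ?thesis by simp
  qed
  have "s / k < lam * (1 - k) / k" using \<open>lam * (1 - k) > s\<close> k by (simp add: divide_strict_right_mono)
  also have "\<dots> \<le> lam * cmod z / cmod w"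
  proof (rule frac_le)
    show "0 \<le> lam * cmod z" using lam0 by simp
    show "lam * (1 - k) \<le> lam * cmod z" using zge lam0 by (intro mult_left_mono) auto
  qed (use \<open>cmod w \<le> k\<close> nw in auto)
  finally have lt: "s / k < lam * cmod z / cmod w" .
  have "ln (s / k) < ln (lam * cmod z / cmod w)"
  proof (rule ln_less_cancel_iff[THEN iffD2])
    show "0 < s / k" using s0 k by simp
    then show "0 < lam * cmod z / cmod w" using lt by linarith
  qed (rule lt)
  also have "ln (lam * cmod z / cmod w) = ln (cmod z) - ln (cmod w) + ln lam"
    using lam0 z0 nw by (simp add: ln_div ln_mult)
  finally show ?thesis using z0 w0 by (simp add: w_def)
qed


theorem lemma4p1:
  fixes \<delta> t lam k \<phi> :: real
  assumes "0 < \<delta>" "\<delta> < 1" "t > 1"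
    and "1 / (t powr (1 - \<delta>) - 1) \<le> lam" "lam \<le> t powr (1 - \<delta>) - 1"
    and "0 < k" "k < t powr (\<delta> - 1)"
    and "ln lam \<ge> 0 \<Longrightarrow> 0 < \<phi> \<and> \<phi> < pi / 2"
    and "ln lam < 0 \<Longrightarrow> 0 < \<phi> \<and> \<phi> < arctan (pi / \<bar>ln lam\<bar>)"
  shows "(\<forall>R::real. R \<ge> 0 \<longrightarrow>
            norm (deriv (\<lambda>w. Fpot w lam) (complex_of_real (1 - k) + complex_of_real R * exp (\<i> * complex_of_real \<phi>)))
              > min (pi / 2 - \<phi>) (ln (t powr (\<delta> - 1) / k)))
       \<and> (\<exists>R0::real. \<forall>R\<ge>R0.
            norm (deriv (\<lambda>w. Fpot w lam) (complex_of_real (1 - k) + complex_of_real R * exp (\<i> * complex_of_real \<phi>)))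
              > pi / 2 - \<phi>)"
proof -
  define s where "s = t powr (\<delta> - 1)"
  have s0: "0 < s" unfolding s_def using assms(3) by simp
  have s1: "s < 1" unfolding s_def using assms(2,3) by (intro powr_less_one) auto
  have tp: "t powr (1 - \<delta>) = 1 / s"
    unfolding s_def using powr_minus_divide[of t "\<delta> - 1"] by simp
  have "1 / (t powr (1 - \<delta>) - 1) = s / (1 - s)" unfolding tp using s0 s1 by (simp add: field_simps)
  then have lam: "s / (1 - s) \<le> lam" using assms(4) by simp
  have k: "0 < k" "k < s" using assms(6,7) s_def by auto
  have ph: "0 < \<phi>" "\<phi> < pi / 2"
  proof -
    have "0 < \<phi> \<and> \<phi> < pi / 2"
    proof (cases "ln lam \<ge> 0")
      case True then show ?thesis using assms(8) by simp
    next
      case False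
      then have "0 < \<phi> \<and> \<phi> < arctan (pi / \<bar>ln lam\<bar>)" using assms(9) by simp
      then show ?thesis using arctan_ubound[of "pi / \<bar>ln lam\<bar>"] by linarith
    qed
    then show "0 < \<phi>" "\<phi> < pi / 2" by auto
  qed
  have c: "cos \<phi> > 0" using ph by (intro cos_gt_zero_pi) auto
  have sn: "sin \<phi> > 0" using ph by (intro sin_gt_zero) auto
  define D where "D R = deriv (\<lambda>w. Fpot w lam) (complex_of_real (1 - k) + complex_of_real R * exp (\<i> * complex_of_real \<phi>))" for R
  have Dform: "D R = Ln z - Ln (1 - z) + complex_of_real (ln lam)"
    if "R \<ge> 0" "z = complex_of_real (1 - k) + complex_of_real R * exp (\<i> * complex_of_real \<phi>)" for R z
  proof -
    have Rez: "Re z = 1 - k + R * cos \<phi>" unfolding that(2) by (rule ReIm_pt(1))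
    have Imz: "Im z = R * sin \<phi>" unfolding that(2) by (rule ReIm_pt(2))
    have "R * cos \<phi> \<ge> 0" using that(1) c by simp
    then have "Re z > 0" using Rez k s1 by linarith
    then have n1: "z \<notin> \<real>\<^sub>\<le>\<^sub>0" by (simp add: complex_nonpos_Reals_iff)
    have n2: "1 - z \<notin> \<real>\<^sub>\<le>\<^sub>0"
    proof (cases "R = 0")
      case True
      then have "Re (1 - z) = k" using Rez by simp
      then show ?thesis using k by (simp add: complex_nonpos_Reals_iff)
    next
      case False
      then have "R * sin \<phi> \<noteq> 0" using sn by simp
      then have "Im (1 - z) \<noteq> 0" using Imz by simp
      then show ?thesis by (simp add: complex_nonpos_Reals_iff)
    qed
    show ?thesis unfolding D_def that(2)[symmetric] by (rule derivF[OF n1 n2])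
  qed
  have partB': "norm (D R) > pi / 2 - \<phi>" if "R > k * cos \<phi>" for R
  proof -
    define z where "z = complex_of_real (1 - k) + complex_of_real R * exp (\<i> * complex_of_real \<phi>)"
    have "k * cos \<phi> > 0" using k c by simp
    then have "R \<ge> 0" using that by linarith
    then have "D R = Ln z - Ln (1 - z) + complex_of_real (ln lam)" using Dform z_def by blast
    moreover have "Im (Ln z - Ln (1 - z) + complex_of_real (ln lam)) > pi/2 - \<phi>"
    proof -
      have "k < 1" using k s1 by linarith
      then show ?thesis using partB[OF k(1) _ ph that z_def, of "ln lam"] by blast
    qed
    ultimately have "Im (D R) > pi/2 - \<phi>" by simp
    then show ?thesis using abs_Im_le_cmod[of "D R"] by linarith
  qed
  have main: "norm (D R) > min (pi / 2 - \<phi>) (ln (s / k))" if "R \<ge> 0" for R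
  proof (cases "R \<le> k * cos \<phi>")
    case True
    define z where "z = complex_of_real (1 - k) + complex_of_real R * exp (\<i> * complex_of_real \<phi>)"
    have "D R = Ln z - Ln (1 - z) + complex_of_real (ln lam)" using Dform z_def that by blast
    moreover have "Re (Ln z - Ln (1 - z) + complex_of_real (ln lam)) > ln (s / k)"
      using partA[OF k s1 ph that True lam z_def] .
    ultimately have "Re (D R) > ln (s / k)" by simp
    then have "norm (D R) > ln (s / k)" using abs_Re_le_cmod[of "D R"] by linarith
    then show ?thesis by linarith
  next
    case False
    then show ?thesis using partB'[of R] by linarith
  qed
  show ?thesis
  proof
    show "\<forall>R::real. R \<ge> 0 \<longrightarrow>
            norm (deriv (\<lambda>w. Fpot w lam) (complex_of_real (1 - k) + complex_of_real R * exp (\<i> * complex_of_real \<phi>)))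
              > min (pi / 2 - \<phi>) (ln (t powr (\<delta> - 1) / k))"
      using main unfolding D_def s_def by blast
    show "\<exists>R0::real. \<forall>R\<ge>R0.
            norm (deriv (\<lambda>w. Fpot w lam) (complex_of_real (1 - k) + complex_of_real R * exp (\<i> * complex_of_real \<phi>)))
              > pi / 2 - \<phi>"
    proof (intro exI allI impI)
      fix R assume "R \<ge> k * cos \<phi> + 1"
      then have "R > k * cos \<phi>" by linarith
      then show "norm (deriv (\<lambda>w. Fpot w lam) (complex_of_real (1 - k) + complex_of_real R * exp (\<i> * complex_of_real \<phi>)))
              > pi / 2 - \<phi>" using partB'[of R] unfolding D_def by blast
    qed
  qed
qed

end
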